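(* For all $k\in\mathbb{N}$: (a) all off-diagonal entries of $\bar L^{(k)}+(c^{(k)}-\pi^{(k)})(c^{(k)}-\pi^{(k)})^T$ are nonpositive (and thus so are all off-diagonal entries of $\bar L^{(k)}$ and of $L^{(k)}$); (b) $L^{(k)}$ is a Laplacian matrix; (c) $S^{(k)}$ is positive semidefinite.
   Context: $\rho=1+\sqrt2$; $\alpha_t=\rho^{\nu(t+1)-1}+1$ ($\nu(i)$ the largest $j$ with $2^j\mid i$). For $k\in\mathbb{N}$ and $n=2^k-1$, $\pi^{(k)}=[\alpha_0,\dots,\alpha_{n-1}]\in\mathbb{R}^n$ (column vector), and $c^{(k)}\in\mathbb{R}^n$ is defined by $c^{(1)}=[2(\rho-1)]$, $c^{(k+1)}=[\pi^{(k)},(1+\rho^{-k})(\rho^{k-1}+1),\rho c^{(k)}-(\rho-1-\rho^{-k})\pi^{(k)}]$. Let $d^{(k)}=c^{(k)}-\pi^{(k)}$ and $N^{(k)}=\bar L^{(k)}+d^{(k)}(d^{(k)})^T$. Define $\bar L^{(1)}=[2(\rho-1)]$ and, in block form with blocks of sizes $n,1,n$, $$\bar L^{(k+1)}=\begin{bmatrix}N^{(k)}&-\rho^k d^{(k)}&0\\-\rho^k (d^{(k)})^T&(\rho^{k-1}+1)(\rho^{k+1}+1)&-\rho(\pi^{(k)})^T\\0&-\rho\pi^{(k)}&\rho^2N^{(k)}\end{bmatrix}-d^{(k+1)}(d^{(k+1)})^T.$$ Define $L^{(k)}=\begin{bmatrix}\bar L^{(k)}&-c^{(k)}\\-(c^{(k)})^T&2(\rho^k-1)\end{bmatrix}\in\mathbb{R}^{(n+1)\times(n+1)}$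 and $S^{(k)}=\begin{bmatrix}1/\sqrt2&(-e_1+e_{n+1})^T\\-e_1+e_{n+1}&L^{(k)}\end{bmatrix}\in\mathbb{R}^{(n+2)\times(n+2)}$, where $e_1,e_{n+1}$ are standard basis vectors of $\mathbb{R}^{n+1}$. A Laplacian matrix is a symmetric matrix whose off-diagonal entries are nonpositive and whose row sums are all $0$. *)

theory Defs
  imports Complex_Main
begin

text \<open>Matrices and vectors of varying dimension are represented as functions
 \<open>nat \<Rightarrow> nat \<Rightarrow> real\<close> / \<open>nat \<Rightarrow> real\<close> with 0-based indices; only indices below the
 stated size are meaningful (entries outside are defined to be 0).
 For k \<ge> 1, n = 2^k - 1; \<open>pi_vec k\<close>, \<open>c_vec k\<close>, \<open>d_vec k\<close> have size n,
 \<open>Lbar k\<close>, \<open>Nmat k\<close> are n x n, \<open>Lmat k\<close> is (n+1) x (n+1), \<open>Smat k\<close> is (n+2) x (n+2).\<close>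

definition rho :: real where "rho = 1 + sqrt 2"

definition nu :: "nat \<Rightarrow> nat" where "nu i = (GREATEST j. 2 ^ j dvd i)"

definition alpha :: "nat \<Rightarrow> real" where
  "alpha t = rho powi (int (nu (t + 1)) - 1) + 1"

definition dimn :: "nat \<Rightarrow> nat" where "dimn k = 2 ^ k - 1"

definition pi_vec :: "nat \<Rightarrow> nat \<Rightarrow> real" where
  "pi_vec k i = (if i < dimn k then alpha i else 0)"

fun c_vec :: "nat \<Rightarrow> nat \<Rightarrow> real" where
  "c_vec 0 = (\<lambda>_. 0)"
| "c_vec (Suc 0) = (\<lambda>i. if i = 0 then 2 * (rho - 1) else 0)"
| "c_vec (Suc (Suc k)) = (let K = Suc k; n = dimn K in
     (\<lambda>i. if i < n then pi_vec K i
          else if i = n then (1 + inverse (rho ^ K)) * (rho ^ (K - 1) + 1)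
          else if i < 2 * n + 1 then rho * c_vec K (i - n - 1)
                 - (rho - 1 - inverse (rho ^ K)) * pi_vec K (i - n - 1)
          else 0))"

definition d_vec :: "nat \<Rightarrow> nat \<Rightarrow> real" where
  "d_vec k i = c_vec k i - pi_vec k i"

fun Lbar :: "nat \<Rightarrow> nat \<Rightarrow> nat \<Rightarrow> real" where
  "Lbar 0 = (\<lambda>_ _. 0)"
| "Lbar (Suc 0) = (\<lambda>i j. if i = 0 \<and> j = 0 then 2 * (rho - 1) else 0)"
| "Lbar (Suc (Suc k)) = (let K = Suc k; n = dimn K;
       N = (\<lambda>i j. Lbar K i j + d_vec K i * d_vec K j);
       B = (\<lambda>i j.
         if i < n \<and> j < n then N i j
         else if i < n \<and> j = n then - (rho ^ K) * d_vec K i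
         else if i = n \<and> j < n then - (rho ^ K) * d_vec K j
         else if i = n \<and> j = n then (rho ^ (K - 1) + 1) * (rho ^ (K + 1) + 1)
         else if i = n \<and> n < j \<and> j < 2 * n + 1 then - rho * pi_vec K (j - n - 1)
         else if n < i \<and> i < 2 * n + 1 \<and> j = n then - rho * pi_vec K (i - n - 1)
         else if n < i \<and> i < 2 * n + 1 \<and> n < j \<and> j < 2 * n + 1
           then rho ^ 2 * N (i - n - 1) (j - n - 1)
         else 0)
     in (\<lambda>i j. if i < 2 * n + 1 \<and> j < 2 * n + 1
               then B i j - d_vec (Suc K) i * d_vec (Suc K) j else 0))"

definition Nmat :: "nat \<Rightarrow> nat \<Rightarrow> nat \<Rightarrow> real" where
  "Nmat k i j = Lbar k i j + d_vec k i * d_vec k j"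

definition Lmat :: "nat \<Rightarrow> nat \<Rightarrow> nat \<Rightarrow> real" where
  "Lmat k i j = (let n = dimn k in
     if i < n \<and> j < n then Lbar k i j
     else if i < n \<and> j = n then - c_vec k i
     else if i = n \<and> j < n then - c_vec k j
     else if i = n \<and> j = n then 2 * (rho ^ k - 1)
     else 0)"

definition fvec :: "nat \<Rightarrow> nat \<Rightarrow> real" where
  "fvec k i = (if i = 0 then -1 else if i = dimn k then 1 else 0)"

definition Smat :: "nat \<Rightarrow> nat \<Rightarrow> nat \<Rightarrow> real" where
  "Smat k i j = (let n = dimn k in
     if i = 0 \<and> j = 0 then 1 / sqrt 2
     else if i = 0 \<and> 1 \<le> j \<and> j \<le> n + 1 then fvec k (j - 1)
     else if j = 0 \<and> 1 \<le> i \<and> i \<le> n + 1 then fvec k (i - 1)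
     else if 1 \<le> i \<and> i \<le> n + 1 \<and> 1 \<le> j \<and> j \<le> n + 1 then Lmat k (i - 1) (j - 1)
     else 0)"

definition is_laplacian :: "nat \<Rightarrow> (nat \<Rightarrow> nat \<Rightarrow> real) \<Rightarrow> bool" where
  "is_laplacian m A \<longleftrightarrow>
     (\<forall>i<m. \<forall>j<m. A i j = A j i) \<and>
     (\<forall>i<m. \<forall>j<m. i \<noteq> j \<longrightarrow> A i j \<le> 0) \<and>
     (\<forall>i<m. (\<Sum>j<m. A i j) = 0)"

definition psd :: "nat \<Rightarrow> (nat \<Rightarrow> nat \<Rightarrow> real) \<Rightarrow> bool" where
  "psd m A \<longleftrightarrow>
     (\<forall>i<m. \<forall>j<m. A i j = A j i) \<and>
     (\<forall>x :: nat \<Rightarrow> real. (\<Sum>i<m. \<Sum>j<m. x i * A i j * x j) \<ge> 0)"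

end

theory Submission
  imports Defs
begin



lemma rho_pos: "rho > 0" unfolding rho_def by (simp add: add_pos_nonneg)
lemma rho_gt1: "rho > 1" unfolding rho_def by simp
lemma rho_sq: "rho ^ 2 = 2 * rho + 1"
  unfolding rho_def by (simp add: power2_eq_square algebra_simps)
lemma rho_inv: "inverse rho = rho - 2"
proof -
  have "rho * (rho - 2) = 1" using rho_sq by (simp add: power2_eq_square algebra_simps)
  then show ?thesis using rho_pos by (simp add: field_simps)
qed
lemma sqrt2_rho: "sqrt 2 = rho - 1" unfolding rho_def by simp

lemma nu_eq:
  assumes "i > 0" "2 ^ j dvd i" "\<not> 2 ^ Suc j dvd i"
  shows "nu i = j"
  unfolding nu_def
proof (rule Greatest_equality)
  show "2 ^ j dvd i" by fact
  fix y assume "2 ^ y dvd (i::nat)"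
  show "y \<le> j"
  proof (rule ccontr)
    assume "\<not> y \<le> j"
    then have "(2::nat) ^ Suc j dvd 2 ^ y" by (intro le_imp_power_dvd) simp
    with \<open>2 ^ y dvd i\<close> assms(3) show False using dvd_trans by blast
  qed
qed

lemma nu_props:
  assumes "i > 0"
  shows "2 ^ nu i dvd i" "\<not> 2 ^ Suc (nu i) dvd i"
proof -
  have bnd: "\<forall>y. 2 ^ y dvd i \<longrightarrow> y \<le> i"
  proof (intro allI impI)
    fix y assume "2 ^ y dvd i"
    then have "(2::nat) ^ y \<le> i" using assms by (simp add: dvd_imp_le)
    moreover have "y < 2 ^ y" by (rule less_exp)
    ultimately show "y \<le> i" by linarith
  qed
  show "2 ^ nu i dvd i" unfolding nu_def
    by (rule GreatestI_nat[of _ 0]) (use bnd in auto)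
  show "\<not> 2 ^ Suc (nu i) dvd i"
  proof
    assume "2 ^ Suc (nu i) dvd i"
    then have "Suc (nu i) \<le> nu i" unfolding nu_def
      by (rule Greatest_le_nat) (use bnd in auto)
    then show False by simp
  qed
qed

lemma nu_pow: "nu (2 ^ K) = K"
proof (rule nu_eq)
  show "\<not> 2 ^ Suc K dvd (2::nat) ^ K"
  proof
    assume "2 ^ Suc K dvd (2::nat) ^ K"
    then have "(2::nat) ^ Suc K \<le> 2 ^ K" by (simp add: dvd_imp_le)
    then show False by simp
  qed
qed auto

lemma nu_shift:
  assumes "0 < q" "q < 2 ^ K"
  shows "nu (2 ^ K + q) = nu q"
proof -
  let ?j = "nu q"
  note P = nu_props[OF assms(1)]
  have "(2::nat) ^ ?j \<le> q" using P(1) assms(1) by (simp add: dvd_imp_le)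
  then have "(2::nat) ^ ?j < 2 ^ K" using assms(2) by linarith
  then have jK: "?j < K" by simp
  show ?thesis
  proof (rule nu_eq)
    show "2 ^ ?j dvd 2 ^ K + q" using P(1) jK by (simp add: le_imp_power_dvd)
    have "(2::nat) ^ Suc ?j dvd 2 ^ K" using jK by (intro le_imp_power_dvd) simp
    then show "\<not> 2 ^ Suc ?j dvd 2 ^ K + q" using P(2) by (simp add: dvd_add_right_iff)
  qed simp
qed

lemma alpha_pos: "alpha t > 0"
  unfolding alpha_def using rho_pos by (simp add: add_pos_nonneg less_imp_le)

lemma alpha_0: "alpha 0 = sqrt 2"
proof -
  have "nu 1 = 0" by (rule nu_eq) auto
  then show ?thesis unfolding alpha_def using rho_inv sqrt2_rho
    by (simp add: power_int_minus[of rho 1, simplified])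
qed

lemma alpha_mid: "K \<ge> 1 \<Longrightarrow> alpha (dimn K) = rho ^ (K - 1) + 1"
proof -
  assume "K \<ge> 1"
  have "dimn K + 1 = 2 ^ K" unfolding dimn_def by simp
  then have "nu (dimn K + 1) = K" using nu_pow by simp
  moreover have "rho powi (int K - 1) = rho ^ (K - 1)"
    using \<open>K \<ge> 1\<close> power_int_of_nat[of rho "K - 1"] by (simp add: of_nat_diff)
  ultimately show ?thesis unfolding alpha_def by simp
qed

lemma alpha_shift: "p < dimn K \<Longrightarrow> alpha (dimn K + 1 + p) = alpha p"
proof -
  assume "p < dimn K"
  have e: "dimn K + 1 + p + 1 = 2 ^ K + (p + 1)" unfolding dimn_def by simp
  have "p + 1 < 2 ^ K" using \<open>p < dimn K\<close> unfolding dimn_def by simp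
  then have "nu (2 ^ K + (p + 1)) = nu (p + 1)" by (intro nu_shift) auto
  then show ?thesis unfolding alpha_def e by simp
qed

lemma dimn_Suc: "dimn (Suc K) = 2 * dimn K + 1"
proof -
  have "(1::nat) \<le> 2 ^ K" by simp
  then show ?thesis unfolding dimn_def power_Suc by linarith
qed

lemma sum_split: fixes f :: "nat \<Rightarrow> 'a::comm_monoid_add" shows "(\<Sum>j<a+b. f j) = (\<Sum>j<a. f j) + (\<Sum>p<b. f (a+p))"
  by (induction b) (simp_all add: add.assoc)

lemma sum_split3: fixes f :: "nat \<Rightarrow> 'a::comm_monoid_add" shows "(\<Sum>j<2*n+1. f j) = (\<Sum>j<n. f j) + f n + (\<Sum>p<n. f (n+1+p))"
proof -
  have "(\<Sum>j<2*n+1. f j) = (\<Sum>j<Suc n + n. f j)"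
    by (rule arg_cong[where f="\<lambda>m. sum f {..<m}"]) simp
  also have "\<dots> = (\<Sum>j<Suc n. f j) + (\<Sum>p<n. f (Suc n + p))" by (rule sum_split)
  also have "\<dots> = (\<Sum>j<n. f j) + f n + (\<Sum>p<n. f (n+1+p))" by simp
  finally show ?thesis .
qed






definition Bfun :: "nat \<Rightarrow> nat \<Rightarrow> nat \<Rightarrow> real" where
 "Bfun K i j = (let n = dimn K in
         if i < n \<and> j < n then Nmat K i j
         else if i < n \<and> j = n then - (rho ^ K) * d_vec K i
         else if i = n \<and> j < n then - (rho ^ K) * d_vec K j
         else if i = n \<and> j = n then (rho ^ (K - 1) + 1) * (rho ^ (K + 1) + 1)
         else if i = n \<and> n < j \<and> j < 2 * n + 1 then - rho * pi_vec K (j - n - 1)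
         else if n < i \<and> i < 2 * n + 1 \<and> j = n then - rho * pi_vec K (i - n - 1)
         else if n < i \<and> i < 2 * n + 1 \<and> n < j \<and> j < 2 * n + 1
           then rho ^ 2 * Nmat K (i - n - 1) (j - n - 1)
         else 0)"

lemma Lbar_Suc: "K \<ge> 1 \<Longrightarrow> Lbar (Suc K) i j =
   (if i < 2 * dimn K + 1 \<and> j < 2 * dimn K + 1 then Bfun K i j - d_vec (Suc K) i * d_vec (Suc K) j else 0)"
  by (cases K) (simp, simp only: Lbar.simps Let_def Bfun_def Nmat_def)

lemma Nmat_Suc: "K \<ge> 1 \<Longrightarrow> i < 2 * dimn K + 1 \<Longrightarrow> j < 2 * dimn K + 1 \<Longrightarrow> Nmat (Suc K) i j = Bfun K i j"
  unfolding Nmat_def by (simp add: Lbar_Suc)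

lemma c_Suc: "K \<ge> 1 \<Longrightarrow> c_vec (Suc K) i = (let n = dimn K in
     if i < n then pi_vec K i
          else if i = n then (1 + inverse (rho ^ K)) * (rho ^ (K - 1) + 1)
          else if i < 2 * n + 1 then rho * c_vec K (i - n - 1)
                 - (rho - 1 - inverse (rho ^ K)) * pi_vec K (i - n - 1)
          else 0)"
  by (cases K) (simp_all add: Let_def)

lemma pi_Suc: "K \<ge> 1 \<Longrightarrow> pi_vec (Suc K) i = (let n = dimn K in
     if i < n then pi_vec K i
          else if i = n then rho ^ (K - 1) + 1
          else if i < 2 * n + 1 then pi_vec K (i - n - 1)
          else 0)"
proof -
  assume K: "K \<ge> 1"
  let ?n = "dimn K"
  consider "i < ?n" | "i = ?n" | "?n < i \<and> i < 2 * ?n + 1" | "2 * ?n + 1 \<le> i" by linarith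
  then show ?thesis
  proof cases
    case 3
    define p where "p = i - ?n - 1"
    have p: "i = ?n + 1 + p" "p < ?n" using 3 unfolding p_def by auto
    then show ?thesis unfolding pi_vec_def dimn_Suc using alpha_shift[of p K] by (simp add: Let_def)
  qed (use K alpha_mid in \<open>auto simp: pi_vec_def dimn_Suc Let_def\<close>)
qed


lemma pow_K: "K \<ge> 1 \<Longrightarrow> rho ^ K = rho * rho ^ (K - 1)"
  by (cases K) auto
lemma pow_SK: "K \<ge> 1 \<Longrightarrow> rho ^ Suc K = (2 * rho + 1) * rho ^ (K - 1)"
  by (cases K) (auto simp: rho_sq[symmetric] power2_eq_square)

lemma d_Suc_A: "K \<ge> 1 \<Longrightarrow> i < dimn K \<Longrightarrow> d_vec (Suc K) i = 0"
  by (simp add: d_vec_def c_Suc pi_Suc Let_def)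
lemma d_Suc_n: "K \<ge> 1 \<Longrightarrow> d_vec (Suc K) (dimn K) = inverse (rho ^ K) * (rho ^ (K - 1) + 1)"
  by (simp add: d_vec_def c_Suc pi_Suc Let_def algebra_simps)
lemma d_Suc_B: "K \<ge> 1 \<Longrightarrow> p < dimn K \<Longrightarrow> d_vec (Suc K) (Suc (dimn K + p)) = rho * d_vec K p + inverse (rho ^ K) * pi_vec K p"
  by (simp add: d_vec_def c_Suc pi_Suc Let_def algebra_simps)
lemma c_Suc_A: "K \<ge> 1 \<Longrightarrow> i < dimn K \<Longrightarrow> c_vec (Suc K) i = pi_vec K i"
  by (simp add: c_Suc Let_def)
lemma c_Suc_n: "K \<ge> 1 \<Longrightarrow> c_vec (Suc K) (dimn K) = (1 + inverse (rho ^ K)) * (rho ^ (K - 1) + 1)"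
  by (simp add: c_Suc Let_def)
lemma c_Suc_B: "K \<ge> 1 \<Longrightarrow> p < dimn K \<Longrightarrow> c_vec (Suc K) (Suc (dimn K + p)) = rho * c_vec K p - (rho - 1 - inverse (rho ^ K)) * pi_vec K p"
  by (simp add: c_Suc Let_def)
lemma pi_Suc_A: "K \<ge> 1 \<Longrightarrow> i < dimn K \<Longrightarrow> pi_vec (Suc K) i = pi_vec K i"
  by (simp add: pi_Suc Let_def)
lemma pi_Suc_n: "K \<ge> 1 \<Longrightarrow> pi_vec (Suc K) (dimn K) = rho ^ (K - 1) + 1"
  by (simp add: pi_Suc Let_def)
lemma pi_Suc_B: "K \<ge> 1 \<Longrightarrow> p < dimn K \<Longrightarrow> pi_vec (Suc K) (Suc (dimn K + p)) = pi_vec K p"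
  by (simp add: pi_Suc Let_def)

lemma B_AA: "i < dimn K \<Longrightarrow> j < dimn K \<Longrightarrow> Bfun K i j = Nmat K i j" by (simp add: Bfun_def)
lemma B_An: "i < dimn K \<Longrightarrow> Bfun K i (dimn K) = - (rho ^ K) * d_vec K i" by (simp add: Bfun_def)
lemma B_nA: "j < dimn K \<Longrightarrow> Bfun K (dimn K) j = - (rho ^ K) * d_vec K j" by (simp add: Bfun_def)
lemma B_nn: "Bfun K (dimn K) (dimn K) = (rho ^ (K - 1) + 1) * (rho ^ (K + 1) + 1)" by (simp add: Bfun_def)
lemma B_nB: "p < dimn K \<Longrightarrow> Bfun K (dimn K) (Suc (dimn K + p)) = - rho * pi_vec K p" by (simp add: Bfun_def)
lemma B_Bn: "p < dimn K \<Longrightarrow> Bfun K (Suc (dimn K + p)) (dimn K) = - rho * pi_vec K p" by (simp add: Bfun_def)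
lemma B_AB: "i < dimn K \<Longrightarrow> p < dimn K \<Longrightarrow> Bfun K i (Suc (dimn K + p)) = 0" by (simp add: Bfun_def)
lemma B_BA: "i < dimn K \<Longrightarrow> p < dimn K \<Longrightarrow> Bfun K (Suc (dimn K + p)) i = 0" by (simp add: Bfun_def)
lemma B_BB: "p < dimn K \<Longrightarrow> q < dimn K \<Longrightarrow> Bfun K (Suc (dimn K + p)) (Suc (dimn K + q)) = rho ^ 2 * Nmat K p q" by (simp add: Bfun_def)

lemma idx_cases:
  fixes i n :: nat
  assumes "i < 2 * n + 1"
  obtains "i < n" | "i = n" | p where "p < n" "i = Suc (n + p)"
proof -
  consider "i < n" | "i = n" | "n < i" by linarith
  then show ?thesis
  proof cases
    case 3
    then have "i - n - 1 < n" "i = Suc (n + (i - n - 1))" using assms by auto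
    then show ?thesis using that by blast
  qed (use that in auto)
qed





definition Inv :: "nat \<Rightarrow> bool" where
"Inv k \<longleftrightarrow> (\<forall>i<dimn k. d_vec k i \<ge> 0)
  \<and> (\<forall>i<dimn k. \<forall>j<dimn k. Nmat k i j = Nmat k j i)
  \<and> (\<forall>i<dimn k. \<forall>j<dimn k. i \<noteq> j \<longrightarrow> Nmat k i j \<le> 0)
  \<and> (\<forall>i<dimn k. (\<Sum>j<dimn k. Nmat k i j) = c_vec k i + d_vec k i * (rho ^ k - 1))
  \<and> (\<Sum>i<dimn k. c_vec k i) = 2 * (rho ^ k - 1)
  \<and> (\<Sum>i<dimn k. pi_vec k i) = rho ^ k - 1
  \<and> c_vec k 0 \<ge> sqrt 2"

lemma alg1: "(r::real)^2 = 2*r+1 \<Longrightarrow> r > 0 \<Longrightarrow> y > 0 \<Longrightarrow>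
  (r*y - 1) + (1 + inverse(r*y))*(y+1) + (r*(2*(r*y-1)) - (r - 1 - inverse(r*y))*(r*y-1)) = 2*((2*r+1)*y - 1)"
  apply (simp add: field_simps)
  by algebra
lemma alg2: "(r::real)^2 = 2*r+1 \<Longrightarrow> r > 0 \<Longrightarrow> y > 0 \<Longrightarrow> -(r*y)*(r*y-1) + (y+1)*((2*r+1)*y+1) + (-r*(r*y-1)) = (1 + inverse(r*y))*(y+1) + inverse(r*y)*(y+1)*((2*r+1)*y-1)"
  apply (simp add: field_simps)
  by algebra
lemma alg3: "(r::real)^2 = 2*r+1 \<Longrightarrow> r > 0 \<Longrightarrow> y > 0 \<Longrightarrow>
  0 + (-r*p) + r^2*(c + (c-p)*(r*y-1)) = (r*c - (r-1-inverse(r*y))*p) + (r*(c-p) + inverse(r*y)*p)*((2*r+1)*y-1)"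
  apply (simp add: field_simps)
  by algebra

lemma pi_nonneg: "pi_vec k i \<ge> 0"
  unfolding pi_vec_def using alpha_pos by (simp add: less_imp_le)

lemma dimn_pos: "k \<ge> 1 \<Longrightarrow> dimn k \<ge> 1"
proof -
  assume "k \<ge> 1"
  then have "(2::nat) ^ 1 \<le> 2 ^ k" by (intro power_increasing) auto
  then show ?thesis unfolding dimn_def by simp
qed

lemma Inv_1: "Inv 1"
proof -
  have n1: "dimn (Suc 0) = 1" by (simp add: dimn_def)
  have p0: "pi_vec (Suc 0) 0 = sqrt 2" by (simp add: pi_vec_def dimn_def alpha_0)
  have c0: "c_vec (Suc 0) 0 = 2 * sqrt 2" by (simp add: sqrt2_rho algebra_simps)
  have d0: "d_vec (Suc 0) 0 = sqrt 2" by (simp add: d_vec_def p0 sqrt2_rho algebra_simps)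
  have L0: "Lbar (Suc 0) 0 0 = 2 * sqrt 2" by (simp add: sqrt2_rho algebra_simps)
  have N0: "Nmat (Suc 0) 0 0 = 2 * sqrt 2 + 2" by (simp only: Nmat_def L0 d0) simp
  have "Inv (Suc 0)" unfolding Inv_def n1
    by (simp add: N0 d0 p0 rho_def algebra_simps)
  then show ?thesis by simp
qed

context
  fixes K :: nat
  assumes K1: "K \<ge> 1" and IH: "Inv K"
begin

abbreviation "nK \<equiv> dimn K"
abbreviation "xK \<equiv> rho ^ K"
abbreviation "yK \<equiv> rho ^ (K - 1)"

lemma IH_d: "i < nK \<Longrightarrow> d_vec K i \<ge> 0" using IH unfolding Inv_def by blast
lemma IH_sym: "i < nK \<Longrightarrow> j < nK \<Longrightarrow> Nmat K i j = Nmat K j i" using IH unfolding Inv_def by blast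
lemma IH_off: "i < nK \<Longrightarrow> j < nK \<Longrightarrow> i \<noteq> j \<Longrightarrow> Nmat K i j \<le> 0" using IH unfolding Inv_def by blast
lemma IH_row: "i < nK \<Longrightarrow> (\<Sum>j<nK. Nmat K i j) = c_vec K i + d_vec K i * (xK - 1)" using IH unfolding Inv_def by blast
lemma IH_c: "(\<Sum>i<nK. c_vec K i) = 2 * (xK - 1)" using IH unfolding Inv_def by blast
lemma IH_pi: "(\<Sum>i<nK. pi_vec K i) = xK - 1" using IH unfolding Inv_def by blast
lemma IH_d_sum: "(\<Sum>i<nK. d_vec K i) = xK - 1"
  unfolding d_vec_def sum_subtractf IH_c IH_pi by simp

lemma x_eq: "xK = rho * yK" using pow_K[OF K1] .
lemma xS_eq: "rho ^ Suc K = (2 * rho + 1) * yK" using pow_SK[OF K1] .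
lemma y_pos: "yK > 0" using rho_pos by simp

lemma dimnS: "dimn (Suc K) = 2 * nK + 1" by (rule dimn_Suc)

lemma step_d: "i < dimn (Suc K) \<Longrightarrow> d_vec (Suc K) i \<ge> 0"
  unfolding dimnS
proof (erule idx_cases)
  assume "i < nK" then show ?thesis using d_Suc_A[OF K1] by simp
next
  assume "i = nK" then show ?thesis using d_Suc_n[OF K1] rho_pos by simp
next
  fix p assume "p < nK" "i = Suc (nK + p)"
  then show ?thesis using d_Suc_B[OF K1] IH_d[of p] rho_pos pi_nonneg[of K p] by simp
qed

lemma B_sym: "i < 2*nK+1 \<Longrightarrow> j < 2*nK+1 \<Longrightarrow> Bfun K i j = Bfun K j i"
  apply (erule idx_cases; erule idx_cases)
  by (auto simp: B_AA B_An B_nA B_nn B_nB B_Bn B_AB B_BA B_BB IH_sym)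

lemma neg1: "i < nK \<Longrightarrow> - (rho ^ K) * d_vec K i \<le> 0"
  using IH_d[of i] rho_pos by simp
lemma neg2: "- rho * pi_vec K p \<le> 0"
  using pi_nonneg[of K p] rho_pos by simp
lemma pos1: "i < nK \<Longrightarrow> 0 \<le> xK * d_vec K i"
  using IH_d[of i] rho_pos by simp
lemma pos2: "0 \<le> rho * pi_vec K p"
  using pi_nonneg[of K p] rho_pos by simp
lemma neg3: "p < nK \<Longrightarrow> q < nK \<Longrightarrow> p \<noteq> q \<Longrightarrow> rho ^ 2 * Nmat K p q \<le> 0"
  using IH_off[of p q] by (simp add: mult_nonneg_nonpos)

lemma B_off: "i < 2*nK+1 \<Longrightarrow> j < 2*nK+1 \<Longrightarrow> i \<noteq> j \<Longrightarrow> Bfun K i j \<le> 0"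
  apply (erule idx_cases; erule idx_cases)
  by (auto simp: B_AA B_An B_nA B_nn B_nB B_Bn B_AB B_BA B_BB IH_off neg1 neg2 neg3 pos1 pos2)

lemma step_sym: "i < dimn (Suc K) \<Longrightarrow> j < dimn (Suc K) \<Longrightarrow> Nmat (Suc K) i j = Nmat (Suc K) j i"
  unfolding dimnS using Nmat_Suc[OF K1] B_sym by simp

lemma step_off: "i < dimn (Suc K) \<Longrightarrow> j < dimn (Suc K) \<Longrightarrow> i \<noteq> j \<Longrightarrow> Nmat (Suc K) i j \<le> 0"
  unfolding dimnS using Nmat_Suc[OF K1] B_off by simp

lemma step_pi: "(\<Sum>i<dimn (Suc K). pi_vec (Suc K) i) = rho ^ Suc K - 1"
proof -
  have "(\<Sum>i<dimn (Suc K). pi_vec (Suc K) i) = (\<Sum>i<nK. pi_vec K i) + (yK + 1) + (\<Sum>p<nK. pi_vec K p)"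
    unfolding dimnS sum_split3 using pi_Suc_A[OF K1] pi_Suc_n[OF K1] pi_Suc_B[OF K1] by simp
  also have "\<dots> = rho ^ Suc K - 1" unfolding IH_pi xS_eq x_eq using rho_sq
    by (simp add: algebra_simps power2_eq_square)
  finally show ?thesis .
qed

lemma step_c: "(\<Sum>i<dimn (Suc K). c_vec (Suc K) i) = 2 * (rho ^ Suc K - 1)"
proof -
  have "(\<Sum>i<dimn (Suc K). c_vec (Suc K) i) = (\<Sum>i<nK. pi_vec K i) + (1 + inverse xK) * (yK + 1)
      + (\<Sum>p<nK. rho * c_vec K p - (rho - 1 - inverse xK) * pi_vec K p)"
    unfolding dimnS sum_split3 using c_Suc_A[OF K1] c_Suc_n[OF K1] c_Suc_B[OF K1] by simp
  also have "\<dots> = (xK - 1) + (1 + inverse xK) * (yK + 1) + (rho * (2 * (xK - 1)) - (rho - 1 - inverse xK) * (xK - 1))"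
    by (simp add: sum_subtractf sum_distrib_left[symmetric] IH_c IH_pi)
  also have "\<dots> = 2 * (rho ^ Suc K - 1)" unfolding xS_eq x_eq
    by (rule alg1[OF rho_sq rho_pos y_pos])
  finally show ?thesis .
qed

lemma step_c0: "c_vec (Suc K) 0 \<ge> sqrt 2"
proof -
  have "0 < nK" using dimn_pos[OF K1] by simp
  then have "c_vec (Suc K) 0 = pi_vec K 0" using c_Suc_A[OF K1] by simp
  also have "\<dots> = sqrt 2" using \<open>0 < nK\<close> by (simp add: pi_vec_def alpha_0)
  finally show ?thesis by simp
qed

lemma step_row: "i < dimn (Suc K) \<Longrightarrow> (\<Sum>j<dimn (Suc K). Nmat (Suc K) i j) = c_vec (Suc K) i + d_vec (Suc K) i * (rho ^ Suc K - 1)"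
proof -
  assume i: "i < dimn (Suc K)"
  have "(\<Sum>j<dimn (Suc K). Nmat (Suc K) i j) = (\<Sum>j<2*nK+1. Bfun K i j)"
    using i unfolding dimnS by (intro sum.cong) (auto simp: Nmat_Suc[OF K1])
  also have "\<dots> = (\<Sum>j<nK. Bfun K i j) + Bfun K i nK + (\<Sum>p<nK. Bfun K i (Suc (nK + p)))"
    using sum_split3[of "Bfun K i" nK] by simp
  also have "\<dots> = c_vec (Suc K) i + d_vec (Suc K) i * (rho ^ Suc K - 1)"
    using i unfolding dimnS
  proof (elim idx_cases)
    assume i: "i < nK"
    have "(\<Sum>j<nK. Bfun K i j) + Bfun K i nK + (\<Sum>p<nK. Bfun K i (Suc (nK + p)))
        = (c_vec K i + d_vec K i * (xK - 1)) + (- xK * d_vec K i) + 0"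
      using i by (simp add: B_AA B_An B_AB IH_row)
    also have "\<dots> = pi_vec K i" by (simp add: d_vec_def algebra_simps)
    finally show ?thesis using i by (simp add: c_Suc_A[OF K1] d_Suc_A[OF K1])
  next
    assume i: "i = nK"
    have "(\<Sum>j<nK. Bfun K i j) + Bfun K i nK + (\<Sum>p<nK. Bfun K i (Suc (nK + p)))
        = (- xK * (xK - 1)) + (yK + 1) * (rho ^ (K + 1) + 1) + (- rho * (xK - 1))"
      using i by (simp add: B_nA B_nn B_nB sum_negf sum_distrib_left[symmetric] IH_d_sum IH_pi)
    also have "\<dots> = (1 + inverse xK) * (yK + 1) + inverse xK * (yK + 1) * (rho ^ Suc K - 1)"
      unfolding Suc_eq_plus1[symmetric] xS_eq x_eq
      by (rule alg2[OF rho_sq rho_pos y_pos])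
    finally show ?thesis using i by (simp add: c_Suc_n[OF K1] d_Suc_n[OF K1])
  next
    fix p assume p: "p < nK" and i: "i = Suc (nK + p)"
    have "(\<Sum>j<nK. Bfun K i j) + Bfun K i nK + (\<Sum>p<nK. Bfun K i (Suc (nK + p)))
        = 0 + (- rho * pi_vec K p) + rho ^ 2 * (c_vec K p + d_vec K p * (xK - 1))"
      using i p by (simp add: B_BA B_Bn B_BB sum_distrib_left[symmetric] IH_row)
    also have "\<dots> = (rho * c_vec K p - (rho - 1 - inverse xK) * pi_vec K p)
        + (rho * d_vec K p + inverse xK * pi_vec K p) * (rho ^ Suc K - 1)"
      unfolding d_vec_def xS_eq x_eq
      by (rule alg3[OF rho_sq rho_pos y_pos])
    finally show ?thesis using i p by (simp add: c_Suc_B[OF K1] d_Suc_B[OF K1])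
  qed
  finally show ?thesis .
qed

lemma Inv_step: "Inv (Suc K)"
  unfolding Inv_def using step_d step_sym step_off step_row step_c step_pi step_c0 by blast

end

lemma Inv_all: "k \<ge> 1 \<Longrightarrow> Inv k"
proof (induction k rule: dec_induct)
  case base then show ?case by (rule Inv_1)
next
  case (step m) then show ?case using Inv_step by simp
qed





lemma lap_quad:
  fixes A :: "nat \<Rightarrow> nat \<Rightarrow> real"
  assumes L: "is_laplacian m A" and pq: "p < m" "q < m" "p \<noteq> q"
  shows "(\<Sum>i<m. \<Sum>j<m. y i * A i j * y j) \<ge> - A p q * (y p - y q)^2"
proof -
  have sym: "\<And>i j. i < m \<Longrightarrow> j < m \<Longrightarrow> A i j = A j i" using L unfolding is_laplacian_def by blast
  have off: "\<And>i j. i < m \<Longrightarrow> j < m \<Longrightarrow> i \<noteq> j \<Longrightarrow> A i j \<le> 0" using L unfolding is_laplacian_def by blast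
  have row: "\<And>i. i < m \<Longrightarrow> (\<Sum>j<m. A i j) = 0" using L unfolding is_laplacian_def by blast
  define Q where "Q = (\<Sum>i<m. \<Sum>j<m. y i * A i j * y j)"
  define g where "g i j = - A i j * (y i - y j)^2" for i j
  have e1: "(\<Sum>i<m. \<Sum>j<m. A i j * (y i)^2) = 0"
  proof -
    have "(\<Sum>i<m. \<Sum>j<m. A i j * (y i)^2) = (\<Sum>i<m. (\<Sum>j<m. A i j) * (y i)^2)"
      by (simp add: sum_distrib_right)
    also have "\<dots> = 0" using row by simp
    finally show ?thesis .
  qed
  have e2: "(\<Sum>i<m. \<Sum>j<m. A i j * (y j)^2) = 0"
  proof -
    have "(\<Sum>i<m. \<Sum>j<m. A i j * (y j)^2) = (\<Sum>j<m. \<Sum>i<m. A i j * (y j)^2)"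
      by (rule sum.swap)
    also have "\<dots> = (\<Sum>j<m. (\<Sum>i<m. A j i) * (y j)^2)"
      by (simp add: sum_distrib_right sym)
    also have "\<dots> = 0" using row by simp
    finally show ?thesis .
  qed
  have gsum: "(\<Sum>i<m. \<Sum>j<m. g i j) = 2 * Q"
  proof -
    have "\<And>i j. g i j = 2 * (y i * A i j * y j) - A i j * (y i)^2 - A i j * (y j)^2"
      unfolding g_def by (simp add: power2_eq_square algebra_simps)
    then have "(\<Sum>i<m. \<Sum>j<m. g i j) = 2 * Q - (\<Sum>i<m. \<Sum>j<m. A i j * (y i)^2) - (\<Sum>i<m. \<Sum>j<m. A i j * (y j)^2)"
      unfolding Q_def by (simp add: sum_subtractf sum_distrib_left)
    then show ?thesis using e1 e2 by simp
  qed
  have gnn: "\<And>i j. i < m \<Longrightarrow> j < m \<Longrightarrow> g i j \<ge> 0"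
  proof -
    fix i j assume "i < m" "j < m"
    show "g i j \<ge> 0"
    proof (cases "i = j")
      case True then show ?thesis unfolding g_def by simp
    next
      case False then show ?thesis unfolding g_def using off[OF \<open>i < m\<close> \<open>j < m\<close>]
        by (simp add: mult_nonpos_nonneg)
    qed
  qed
  define G where "G i = (\<Sum>j<m. g i j)" for i
  have Gnn: "\<And>i. i < m \<Longrightarrow> G i \<ge> 0" unfolding G_def using gnn by (intro sum_nonneg) auto
  have Gp: "G p \<ge> g p q" unfolding G_def using pq gnn by (intro member_le_sum) auto
  have Gq: "G q \<ge> g q p" unfolding G_def using pq gnn by (intro member_le_sum) auto
  have "G p + G q = (\<Sum>i\<in>{p,q}. G i)" using pq by simp
  also have "\<dots> \<le> (\<Sum>i<m. G i)" using pq Gnn by (intro sum_mono2) auto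
  finally have "g p q + g q p \<le> 2 * Q" using Gp Gq gsum unfolding G_def by linarith
  moreover have "g q p = g p q" unfolding g_def using sym[OF pq(1) pq(2)] by (simp add: power2_commute)
  ultimately show ?thesis unfolding Q_def g_def by simp
qed


lemma S00: "Smat k 0 0 = 1 / sqrt 2" by (simp add: Smat_def)
lemma S0j: "j \<le> dimn k \<Longrightarrow> Smat k 0 (Suc j) = fvec k j" by (simp add: Smat_def Let_def)
lemma Si0: "i \<le> dimn k \<Longrightarrow> Smat k (Suc i) 0 = fvec k i" by (simp add: Smat_def Let_def)
lemma Sij: "i \<le> dimn k \<Longrightarrow> j \<le> dimn k \<Longrightarrow> Smat k (Suc i) (Suc j) = Lmat k i j" by (simp add: Smat_def Let_def)

lemma S_quad:
  assumes k1: "k \<ge> 1" and L: "is_laplacian (dimn k + 1) (Lmat k)" and c0: "c_vec k 0 \<ge> sqrt 2"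
  shows "(\<Sum>i<dimn k + 2. \<Sum>j<dimn k + 2. x i * Smat k i j * x j) \<ge> 0"
proof -
  let ?n = "dimn k"
  define y where "y i = x (Suc i)" for i
  have n0: "?n \<noteq> 0" using dimn_pos[OF k1] by simp
  define F where "F = (\<Sum>j<?n+1. fvec k j * y j)"
  define QL where "QL = (\<Sum>i<?n+1. \<Sum>j<?n+1. y i * Lmat k i j * y j)"
  have F_eq: "F = y ?n - y 0"
  proof -
    have "\<And>j. fvec k j * y j = (if j = ?n then y ?n else 0) - (if j = 0 then y 0 else 0)"
      unfolding fvec_def using n0 by auto
    then show ?thesis unfolding F_def by (simp add: sum_subtractf)
  qed
  have split: "\<And>f :: nat \<Rightarrow> real. (\<Sum>i<?n+2. f i) = f 0 + (\<Sum>i<?n+1. f (Suc i))"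
  proof -
    fix f :: "nat \<Rightarrow> real"
    have "(\<Sum>i<?n+2. f i) = (\<Sum>i<Suc (?n+1). f i)" by simp
    also have "\<dots> = f 0 + (\<Sum>i<?n+1. f (Suc i))" by (rule sum.lessThan_Suc_shift)
    finally show "(\<Sum>i<?n+2. f i) = f 0 + (\<Sum>i<?n+1. f (Suc i))" .
  qed
  have row0: "(\<Sum>j<?n+2. x 0 * Smat k 0 j * x j) = (x 0)^2 / sqrt 2 + x 0 * F"
  proof -
    have "(\<Sum>j<?n+2. x 0 * Smat k 0 j * x j) = x 0 * Smat k 0 0 * x 0 + (\<Sum>j<?n+1. x 0 * Smat k 0 (Suc j) * x (Suc j))"
      by (rule split)
    also have "(\<Sum>j<?n+1. x 0 * Smat k 0 (Suc j) * x (Suc j)) = x 0 * F"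
      unfolding F_def y_def sum_distrib_left by (intro sum.cong) (auto simp: S0j)
    finally show ?thesis by (simp add: S00 power2_eq_square)
  qed
  have rowS: "\<And>i. i < ?n+1 \<Longrightarrow> (\<Sum>j<?n+2. x (Suc i) * Smat k (Suc i) j * x j)
      = y i * fvec k i * x 0 + (\<Sum>j<?n+1. y i * Lmat k i j * y j)"
  proof -
    fix i assume i: "i < ?n+1"
    have "(\<Sum>j<?n+2. x (Suc i) * Smat k (Suc i) j * x j) = x (Suc i) * Smat k (Suc i) 0 * x 0 + (\<Sum>j<?n+1. x (Suc i) * Smat k (Suc i) (Suc j) * x (Suc j))"
      by (rule split)
    also have "\<dots> = y i * fvec k i * x 0 + (\<Sum>j<?n+1. y i * Lmat k i j * y j)"
      using i unfolding y_def by (auto simp: Si0 Sij intro!: sum.cong)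
    finally show "(\<Sum>j<?n+2. x (Suc i) * Smat k (Suc i) j * x j)
      = y i * fvec k i * x 0 + (\<Sum>j<?n+1. y i * Lmat k i j * y j)" .
  qed
  have "(\<Sum>i<?n+2. \<Sum>j<?n+2. x i * Smat k i j * x j) = (\<Sum>j<?n+2. x 0 * Smat k 0 j * x j)
      + (\<Sum>i<?n+1. \<Sum>j<?n+2. x (Suc i) * Smat k (Suc i) j * x j)"
    by (rule split)
  also have "\<dots> = (x 0)^2 / sqrt 2 + x 0 * F
      + (\<Sum>i<?n+1. y i * fvec k i * x 0 + (\<Sum>j<?n+1. y i * Lmat k i j * y j))"
    unfolding row0 using rowS by (intro arg_cong2[where f="(+)"] refl sum.cong) auto
  also have "\<dots> = (x 0)^2 / sqrt 2 + 2 * x 0 * F + QL"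
  proof -
    have "(\<Sum>i<?n+1. y i * fvec k i * x 0) = x 0 * F"
      unfolding F_def sum_distrib_left by (intro sum.cong) auto
    then show ?thesis unfolding QL_def by (simp add: sum.distrib)
  qed
  finally have Qeq: "(\<Sum>i<?n+2. \<Sum>j<?n+2. x i * Smat k i j * x j) = (x 0)^2 / sqrt 2 + 2 * x 0 * F + QL" .
  have "QL \<ge> - Lmat k 0 ?n * (y 0 - y ?n)^2"
    unfolding QL_def using lap_quad[OF L, of 0 ?n y] n0 by simp
  also have "- Lmat k 0 ?n = c_vec k 0" using n0 by (simp add: Lmat_def)
  finally have QLb: "QL \<ge> c_vec k 0 * (y 0 - y ?n)^2" .
  have "c_vec k 0 * (y 0 - y ?n)^2 \<ge> sqrt 2 * (y 0 - y ?n)^2"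
    using c0 by (intro mult_right_mono) auto
  with QLb have QLb2: "QL \<ge> sqrt 2 * F^2" unfolding F_eq by (simp add: power2_commute)
  have s: "sqrt 2 > 0" "sqrt 2 * sqrt 2 = (2::real)" by auto
  have "(x 0)^2 / sqrt 2 + 2 * x 0 * F + sqrt 2 * F^2 = (x 0 + sqrt 2 * F)^2 / sqrt 2"
    using s by (simp add: field_simps power2_eq_square)
  also have "\<dots> \<ge> 0" by simp
  finally show ?thesis unfolding Qeq using QLb2 by (simp add: numeral_2_eq_2)
qed





theorem lemma14:
  fixes k :: nat
  assumes "k \<ge> 1"
  shows "(\<forall>i<dimn k. \<forall>j<dimn k. i \<noteq> j \<longrightarrow>
            Lbar k i j + (c_vec k i - pi_vec k i) * (c_vec k j - pi_vec k j) \<le> 0)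
       \<and> (\<forall>i<dimn k. \<forall>j<dimn k. i \<noteq> j \<longrightarrow> Lbar k i j \<le> 0)
       \<and> (\<forall>i<dimn k + 1. \<forall>j<dimn k + 1. i \<noteq> j \<longrightarrow> Lmat k i j \<le> 0)
       \<and> is_laplacian (dimn k + 1) (Lmat k)
       \<and> psd (dimn k + 2) (Smat k)"
proof -
  let ?n = "dimn k"
  have I: "Inv k" using Inv_all[OF assms] .
  have dnn: "\<And>i. i < ?n \<Longrightarrow> d_vec k i \<ge> 0" using I unfolding Inv_def by blast
  have Nsym: "\<And>i j. i < ?n \<Longrightarrow> j < ?n \<Longrightarrow> Nmat k i j = Nmat k j i" using I unfolding Inv_def by blast
  have Noff: "\<And>i j. i < ?n \<Longrightarrow> j < ?n \<Longrightarrow> i \<noteq> j \<Longrightarrow> Nmat k i j \<le> 0" using I unfolding Inv_def by blast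
  have Nrow: "\<And>i. i < ?n \<Longrightarrow> (\<Sum>j<?n. Nmat k i j) = c_vec k i + d_vec k i * (rho ^ k - 1)" using I unfolding Inv_def by blast
  have csum: "(\<Sum>i<?n. c_vec k i) = 2 * (rho ^ k - 1)" using I unfolding Inv_def by blast
  have pisum: "(\<Sum>i<?n. pi_vec k i) = rho ^ k - 1" using I unfolding Inv_def by blast
  have c0: "c_vec k 0 \<ge> sqrt 2" using I unfolding Inv_def by blast
  have dsum: "(\<Sum>i<?n. d_vec k i) = rho ^ k - 1" unfolding d_vec_def sum_subtractf csum pisum by simp
  have Lb: "\<And>i j. Lbar k i j = Nmat k i j - d_vec k i * d_vec k j" by (simp add: Nmat_def)
  have LAA: "\<And>i j. i < ?n \<Longrightarrow> j < ?n \<Longrightarrow> Lmat k i j = Lbar k i j" by (simp add: Lmat_def)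
  have LAn: "\<And>i. i < ?n \<Longrightarrow> Lmat k i ?n = - c_vec k i" by (simp add: Lmat_def)
  have LnA: "\<And>j. j < ?n \<Longrightarrow> Lmat k ?n j = - c_vec k j" by (simp add: Lmat_def)
  have Lnn: "Lmat k ?n ?n = 2 * (rho ^ k - 1)" by (simp add: Lmat_def)
  have cnn: "\<And>i. i < ?n \<Longrightarrow> c_vec k i \<ge> 0"
    using dnn pi_nonneg unfolding d_vec_def by (metis diff_ge_0_iff_ge order_trans)
  have P1: "\<forall>i<?n. \<forall>j<?n. i \<noteq> j \<longrightarrow> Lbar k i j + (c_vec k i - pi_vec k i) * (c_vec k j - pi_vec k j) \<le> 0"
    using Noff by (simp add: Lb d_vec_def)
  have P2: "\<forall>i<?n. \<forall>j<?n. i \<noteq> j \<longrightarrow> Lbar k i j \<le> 0"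
  proof (intro allI impI)
    fix i j assume "i < ?n" "j < ?n" "i \<noteq> j"
    then have "Nmat k i j \<le> 0" "d_vec k i * d_vec k j \<ge> 0" using Noff dnn by auto
    then show "Lbar k i j \<le> 0" by (simp add: Lb)
  qed
  have P3: "\<forall>i<?n+1. \<forall>j<?n+1. i \<noteq> j \<longrightarrow> Lmat k i j \<le> 0"
  proof (intro allI impI)
    fix i j assume "i < ?n+1" "j < ?n+1" "i \<noteq> j"
    then consider "i < ?n" "j < ?n" | "i < ?n" "j = ?n" | "i = ?n" "j < ?n" by linarith
    then show "Lmat k i j \<le> 0"
      using P2 cnn \<open>i \<noteq> j\<close> by cases (simp_all add: LAA LAn LnA)
  qed
  have sym: "\<forall>i<?n+1. \<forall>j<?n+1. Lmat k i j = Lmat k j i"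
  proof (intro allI impI)
    fix i j assume "i < ?n+1" "j < ?n+1"
    then consider "i < ?n" "j < ?n" | "i < ?n" "j = ?n" | "i = ?n" "j < ?n" | "i = ?n" "j = ?n" by linarith
    then show "Lmat k i j = Lmat k j i"
      by cases (simp_all add: LAA LAn LnA Lb Nsym)
  qed
  have rows: "\<forall>i<?n+1. (\<Sum>j<?n+1. Lmat k i j) = 0"
  proof (intro allI impI)
    fix i assume i: "i < ?n+1"
    have e: "(\<Sum>j<?n+1. Lmat k i j) = (\<Sum>j<?n. Lmat k i j) + Lmat k i ?n" by simp
    show "(\<Sum>j<?n+1. Lmat k i j) = 0"
    proof (cases "i < ?n")
      case True
      have "(\<Sum>j<?n. Lmat k i j) = (\<Sum>j<?n. Nmat k i j - d_vec k i * d_vec k j)"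
        using True by (intro sum.cong) (auto simp: LAA Lb)
      also have "\<dots> = c_vec k i" using True
        by (simp add: sum_subtractf sum_distrib_left[symmetric] Nrow dsum)
      finally show ?thesis unfolding e using True by (simp add: LAn)
    next
      case False
      then have "i = ?n" using i by simp
      have "(\<Sum>j<?n. Lmat k i j) = (\<Sum>j<?n. - c_vec k j)"
        using \<open>i = ?n\<close> by (intro sum.cong) (auto simp: LnA)
      also have "\<dots> = - 2 * (rho ^ k - 1)" by (simp add: sum_negf csum)
      finally show ?thesis unfolding e using \<open>i = ?n\<close> by (simp add: Lnn)
    qed
  qed
  have lap: "is_laplacian (?n + 1) (Lmat k)"
    unfolding is_laplacian_def using sym P3 rows by blast
  have Ssym: "\<forall>i<?n+2. \<forall>j<?n+2. Smat k i j = Smat k j i"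
  proof (intro allI impI)
    fix i j assume i: "i < ?n+2" and j: "j < ?n+2"
    show "Smat k i j = Smat k j i"
    proof (cases i)
      case 0 then show ?thesis
        using j by (cases j) (auto simp: S0j Si0)
    next
      case (Suc i')
      then show ?thesis using i j sym by (cases j) (auto simp: S0j Si0 Sij)
    qed
  qed
  have psd: "psd (?n + 2) (Smat k)"
    unfolding psd_def using Ssym S_quad[OF assms lap c0] by blast
  show ?thesis using P1 P2 P3 lap psd by blast
qed



end
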